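(* A finite word is LSP if and only if it is a prefix of an infinite LSP word.
   Context: A finite word $u$ is a left special factor of a (finite or infinite) word $w$ if there are distinct letters $x\neq y$ such that $xu$ and $yu$ are factors of $w$. A word is LSP if every left special factor of it is a prefix of it. Words are over a finite alphabet. *)

theory Defs
  imports Main "HOL-Library.Sublist"
begin

definition inf_factor :: "'a list \<Rightarrow> (nat \<Rightarrow> 'a) \<Rightarrow> bool" where
  "inf_factor u x \<longleftrightarrow> (\<exists>i. u = map x [i..<i + length u])"

definition inf_prefix :: "'a list \<Rightarrow> (nat \<Rightarrow> 'a) \<Rightarrow> bool" where
  "inf_prefix u x \<longleftrightarrow> u = map x [0..<length u]"

definition left_special :: "'a list \<Rightarrow> 'a list \<Rightarrow> bool" where
  "left_special u w \<longleftrightarrow> (\<exists>a b. a \<noteq> b \<and> sublist (a # u) w \<and> sublist (b # u) w)"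

definition inf_left_special :: "'a list \<Rightarrow> (nat \<Rightarrow> 'a) \<Rightarrow> bool" where
  "inf_left_special u x \<longleftrightarrow> (\<exists>a b. a \<noteq> b \<and> inf_factor (a # u) x \<and> inf_factor (b # u) x)"

definition LSP :: "'a list \<Rightarrow> bool" where
  "LSP w \<longleftrightarrow> (\<forall>u. left_special u w \<longrightarrow> prefix u w)"

definition inf_LSP :: "(nat \<Rightarrow> 'a) \<Rightarrow> bool" where
  "inf_LSP x \<longleftrightarrow> (\<forall>u. inf_left_special u x \<longrightarrow> inf_prefix u x)"

end

theory Submission
  imports Defs
begin

lemma suffix_snoc_cases:
  assumes "sublist xs (ys @ [c])"
  shows "sublist xs ys \<or> suffix xs (ys @ [c])"
proof -
  from assms have "sublist xs ys \<or> sublist xs [c] \<or> (\<exists>xs1 xs2. xs = xs1 @ xs2 \<and> suffix xs1 ys \<and> prefix xs2 [c])"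
    by (simp add: sublist_append)
  then show ?thesis
  proof (elim disjE exE conjE)
    assume "sublist xs [c]"
    then have "xs = [] \<or> xs = [c]" by (cases xs) (auto simp: sublist_Cons_right)
    then show ?thesis by auto
  next
    fix xs1 xs2 assume h: "xs = xs1 @ xs2" "suffix xs1 ys" "prefix xs2 [c]"
    from h(3) have "xs2 = [] \<or> xs2 = [c]" by (cases xs2) auto
    then show ?thesis using h by (auto simp: suffix_def)
  qed auto
qed

lemma same_len_suffix_eq:
  "suffix xs zs \<Longrightarrow> suffix ys zs \<Longrightarrow> length xs = length ys \<Longrightarrow> xs = ys"
  by (metis suffix_length_suffix order_refl suffix_order.antisym)

lemma suffix_snoc_cons: "suffix (a # t @ [d]) (w @ [c]) \<Longrightarrow> d = c \<and> suffix (a # t) w"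
  using snoc_suffix_snoc[of "a # t" d w c] by simp

lemma sublist_cons_snoc: "sublist (x # t @ [c]) w \<Longrightarrow> sublist (x # t) w"
proof -
  assume "sublist (x # t @ [c]) w"
  then obtain ps ss where "w = ps @ (x # t @ [c]) @ ss" unfolding sublist_def by blast
  then have "w = ps @ (x # t) @ ([c] @ ss)" by simp
  then show ?thesis unfolding sublist_def by blast
qed

lemma ext_ex:
  assumes L: "LSP w"
  shows "\<exists>c. LSP (w @ [c])"
proof -
  define S where "S = (\<lambda>t. left_special t w \<and> (\<exists>a. suffix (a # t) w))"
  have key: "LSP (w @ [c])" if hc: "\<And>t a b. S t \<Longrightarrow> suffix (a # t) w \<Longrightarrow> a \<noteq> b \<Longrightarrow>
      sublist (b # t @ [c]) w \<Longrightarrow> prefix (t @ [c]) w" for c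
    unfolding LSP_def
  proof (intro allI impI)
    fix u assume "left_special u (w @ [c])"
    then obtain a b where ab: "a \<noteq> b" "sublist (a # u) (w @ [c])" "sublist (b # u) (w @ [c])"
      unfolding left_special_def by blast
    show "prefix u (w @ [c])"
    proof (cases "sublist (a # u) w \<and> sublist (b # u) w")
      case True
      then have "left_special u w" using ab unfolding left_special_def by blast
      then have "prefix u w" using L unfolding LSP_def by blast
      then show ?thesis by (rule prefix_prefix)
    next
      case False
      have main: "prefix u (w @ [c])" if h: "a' \<noteq> b'" "suffix (a' # u) (w @ [c])" "sublist (b' # u) w" for a' b'
      proof (cases u rule: rev_cases)
        case Nil then show ?thesis by simp
      next
        case (snoc t d)
        have "suffix (a' # t @ [d]) (w @ [c])" using h(2) unfolding snoc .
        then have dsa: "d = c \<and> suffix (a' # t) w" by (rule suffix_snoc_cons)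
        then have d: "d = c" ..
        from dsa have sa: "suffix (a' # t) w" ..
        from h(3) have sb: "sublist (b' # t @ [c]) w" by (simp only: snoc d)
        from sb have B: "sublist (b' # t) w" by (rule sublist_cons_snoc)
        have A: "sublist (a' # t) w" using sa by (rule suffix_imp_sublist)
        have lsp: "left_special t w" unfolding left_special_def
          by (rule exI[of _ a'], rule exI[of _ b'], intro conjI, fact h(1), fact A, fact B)
        have "S t" unfolding S_def by (intro conjI lsp exI[of _ a'] sa)
        then have "prefix (t @ [c]) w" by (rule hc[OF _ sa h(1) sb])
        then have "prefix u w" by (simp only: snoc d)
        then show ?thesis by (rule prefix_prefix)
      qed
      show ?thesis
      proof (cases "sublist (a # u) w")
        case True
        with False have nb: "\<not> sublist (b # u) w" by blast
        with suffix_snoc_cases[OF ab(3)] have "suffix (b # u) (w @ [c])" by blast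
        from main[OF ab(1)[symmetric] this True] show ?thesis .
      next
        case na: False
        with suffix_snoc_cases[OF ab(2)] have sa: "suffix (a # u) (w @ [c])" by blast
        have "sublist (b # u) w"
        proof (rule ccontr)
          assume "\<not> sublist (b # u) w"
          with suffix_snoc_cases[OF ab(3)] have "suffix (b # u) (w @ [c])" by blast
          from same_len_suffix_eq[OF sa this] have "a # u = b # u" by simp
          with ab(1) show False by simp
        qed
        from main[OF ab(1) sa this] show ?thesis .
      qed
    qed
  qed
  show ?thesis
  proof (cases "\<exists>t. S t")
    case False
    then show ?thesis using key by blast
  next
    case True
    then obtain t0 where "S t0" by blast
    have "\<forall>y. S y \<longrightarrow> length y < length w"
      unfolding S_def by (auto dest: suffix_length_le)
    from ex_has_greatest_nat[of S t0 length, OF \<open>S t0\<close> this]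
    obtain tm where tm: "S tm" "\<And>y. S y \<Longrightarrow> length y \<le> length tm" by blast
    from tm(1) obtain am where sam: "suffix (am # tm) w" and lstm: "left_special tm w"
      unfolding S_def by blast
    from lstm L have ptm: "prefix tm w" unfolding LSP_def by blast
    from sam have lt: "length tm < length w" by (auto dest: suffix_length_le)
    define c where "c = w ! length tm"
    have ptmc: "prefix (tm @ [c]) w"
    proof -
      have "tm = take (length tm) w" using ptm by (auto simp: prefix_def)
      then have "tm @ [c] = take (Suc (length tm)) w"
        using lt unfolding c_def by (simp add: take_Suc_conv_app_nth)
      then show ?thesis by (simp add: take_is_prefix)
    qed
    have "LSP (w @ [c])"
    proof (rule key)
      fix t a b assume St: "S t" and sa: "suffix (a # t) w" and ab: "a \<noteq> b"
        and sb: "sublist (b # t @ [c]) w"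
      have le: "length t \<le> length tm" using tm(2) St by blast
      show "prefix (t @ [c]) w"
      proof (cases "length t = length tm")
        case True
        have "suffix t w" using sa by (auto simp: suffix_def)
        moreover have "suffix tm w" using sam by (auto simp: suffix_def)
        ultimately have "t = tm" using True by (rule same_len_suffix_eq)
        then show ?thesis using ptmc by simp
      next
        case False
        with le have "length (a # t) \<le> length tm" by simp
        moreover have "suffix tm w" using sam by (auto simp: suffix_def)
        ultimately have "suffix (a # t) tm" using sa suffix_length_suffix by blast
        then have "suffix (a # t @ [c]) (tm @ [c])" by (auto simp: suffix_def)
        then have "sublist (a # t @ [c]) w"
          using sublist_order.order.trans[OF suffix_imp_sublist prefix_imp_sublist, OF _ ptmc] by simp
        then have "left_special (t @ [c]) w" using sb ab unfolding left_special_def by blast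
        then show ?thesis using L unfolding LSP_def by blast
      qed
    qed
    then show ?thesis by blast
  qed
qed

definition ext :: "'a list \<Rightarrow> 'a list" where
  "ext v = v @ [SOME c. LSP (v @ [c])]"

lemma ext_LSP: "LSP v \<Longrightarrow> LSP (ext v)"
proof -
  assume "LSP v"
  then have "\<exists>c. LSP (v @ [c])" by (rule ext_ex)
  then show ?thesis unfolding ext_def by (rule someI_ex)
qed

lemma iter_LSP: "LSP w \<Longrightarrow> LSP ((ext ^^ k) w)"
  by (induction k) (auto intro: ext_LSP)

lemma iter_len: "length ((ext ^^ k) w) = length w + k"
  by (induction k) (auto simp: ext_def)

lemma iter_prefix: "k \<le> m \<Longrightarrow> prefix ((ext ^^ k) w) ((ext ^^ m) w)"
proof (induction m)
  case 0 then show ?case by simp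
next
  case (Suc m)
  show ?case
  proof (cases "k = Suc m")
    case True then show ?thesis by simp
  next
    case False
    with Suc have "prefix ((ext ^^ k) w) ((ext ^^ m) w)" by simp
    moreover have "prefix ((ext ^^ m) w) (ext ((ext ^^ m) w))" by (simp add: ext_def)
    ultimately have "prefix ((ext ^^ k) w) (ext ((ext ^^ m) w))" by (rule prefix_order.trans)
    then show ?thesis by simp
  qed
qed

lemma prefix_nth': "prefix xs ys \<Longrightarrow> i < length xs \<Longrightarrow> xs ! i = ys ! i"
  by (auto simp: prefix_def nth_append)

definition limw :: "'a list \<Rightarrow> nat \<Rightarrow> 'a" where
  "limw w n = (ext ^^ Suc n) w ! n"

lemma limw_nth: "n < length w + m \<Longrightarrow> limw w n = (ext ^^ m) w ! n"
proof -
  assume h: "n < length w + m"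
  let ?M = "max (Suc n) m"
  have "limw w n = (ext ^^ ?M) w ! n"
    unfolding limw_def by (rule prefix_nth', rule iter_prefix) (auto simp: iter_len simp del: funpow.simps)
  also have "\<dots> = (ext ^^ m) w ! n"
    using h by (intro prefix_nth'[symmetric]) (auto intro: iter_prefix simp: iter_len)
  finally show ?thesis .
qed

lemma limw_map: "i + l \<le> length w + m \<Longrightarrow> map (limw w) [i..<i+l] = take l (drop i ((ext ^^ m) w))"
  by (rule nth_equalityI) (auto simp: iter_len limw_nth)

lemma take_drop_sublist: "sublist (take l (drop i W)) W"
proof -
  have "W = take i W @ take l (drop i W) @ drop l (drop i W)"
    by (metis append_take_drop_id)
  then show ?thesis by (metis sublist_appendI)
qed

lemma sublist_inf_factor:
  assumes "sublist v (map x [0..<n])"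
  shows "inf_factor v x"
proof -
  from assms obtain ps ss where e: "map x [0..<n] = ps @ v @ ss" by (auto simp: sublist_def)
  have "v = map x [length ps..<length ps + length v]"
  proof (rule nth_equalityI)
    fix j assume j: "j < length v"
    have "(ps @ v @ ss) ! (length ps + j) = v ! j" using j by (simp add: nth_append)
    moreover have "length ps + j < n" using j arg_cong[OF e, of length] by simp
    moreover have "map x [0..<n] ! (length ps + j) = x (length ps + j)"
      using \<open>length ps + j < n\<close> by simp
    ultimately have "v ! j = x (length ps + j)" using e by simp
    then show "v ! j = map x [length ps..<length ps + length v] ! j" using j by simp
  qed simp
  then show ?thesis unfolding inf_factor_def by blast
qed

theorem lemma6:
  fixes w :: "'a::finite list"
  shows "LSP w \<longleftrightarrow> (\<exists>x :: nat \<Rightarrow> 'a. inf_LSP x \<and> inf_prefix w x)"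
proof
  assume L: "LSP w"
  let ?x = "limw w"
  have "inf_LSP ?x" unfolding inf_LSP_def
  proof (intro allI impI)
    fix u assume "inf_left_special u ?x"
    then obtain a b where ab0: "a \<noteq> b" "inf_factor (a # u) ?x" "inf_factor (b # u) ?x"
      unfolding inf_left_special_def by blast
    obtain i where ai: "a # u = map ?x [i..<i + length (a # u)]"
      using ab0(2) unfolding inf_factor_def by (erule exE)
    obtain j where bj: "b # u = map ?x [j..<j + length (b # u)]"
      using ab0(3) unfolding inf_factor_def by (erule exE)
    note ab = ab0(1) ai bj
    define m where "m = i + j + length u + 1"
    let ?W = "(ext ^^ m) w"
    have "a # u = map ?x [i..<i + length (a # u)]" by (rule ab(2))
    also have "\<dots> = take (length (a # u)) (drop i ?W)"
      by (rule limw_map) (simp add: m_def)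
    finally have "a # u = take (length (a # u)) (drop i ?W)" .
    then have sa: "sublist (a # u) ?W" by (metis take_drop_sublist)
    have "b # u = map ?x [j..<j + length (b # u)]" by (rule ab(3))
    also have "\<dots> = take (length (b # u)) (drop j ?W)"
      by (rule limw_map) (simp add: m_def)
    finally have "b # u = take (length (b # u)) (drop j ?W)" .
    then have sb: "sublist (b # u) ?W" by (metis take_drop_sublist)
    have "prefix u ?W" using iter_LSP[OF L, of m] sa sb ab(1)
      unfolding LSP_def left_special_def by blast
    then have "u = take (length u) ?W" by (auto simp: prefix_def)
    also have "\<dots> = map ?x [0..<length u]"
      using limw_map[of 0 "length u" w m] unfolding m_def by simp
    finally show "inf_prefix u ?x" unfolding inf_prefix_def .
  qed
  moreover have "inf_prefix w ?x"
    unfolding inf_prefix_def using limw_map[of 0 "length w" w 0] by simp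
  ultimately show "\<exists>x. inf_LSP x \<and> inf_prefix w x" by blast
next
  assume "\<exists>x. inf_LSP x \<and> inf_prefix w x"
  then obtain x where X: "inf_LSP x" and P: "w = map x [0..<length w]"
    unfolding inf_prefix_def by blast
  show "LSP w" unfolding LSP_def
  proof (intro allI impI)
    fix u assume "left_special u w"
    then obtain a b where ab: "a \<noteq> b" "sublist (a # u) w" "sublist (b # u) w"
      unfolding left_special_def by blast
    have "sublist (a # u) (map x [0..<length w])" using ab(2) by (simp only: P[symmetric])
    then have fa: "inf_factor (a # u) x" by (rule sublist_inf_factor)
    have "sublist (b # u) (map x [0..<length w])" using ab(3) by (simp only: P[symmetric])
    then have fb: "inf_factor (b # u) x" by (rule sublist_inf_factor)
    have "inf_left_special u x" unfolding inf_left_special_def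
      using ab(1) fa fb by blast
    then have pu: "u = map x [0..<length u]" using X unfolding inf_LSP_def inf_prefix_def by blast
    have lu: "length u \<le> length w" using sublist_length_le[OF ab(2)] by simp
    have "w = map x [0..<length u] @ map x [length u..<length w]"
    proof -
      have "[0..<length w] = [0..<length u] @ [length u..<length w]"
        using lu by (metis le_add_diff_inverse upt_add_eq_append zero_le)
      then have "map x [0..<length w] = map x [0..<length u] @ map x [length u..<length w]"
        by simp
      with P show ?thesis by (rule trans)
    qed
    then show "prefix u w" using pu by (metis prefixI)
  qed
qed

end
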